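(* Let $p$ be an odd prime, $n\ge2$ an integer, and $\mu_{p^n}$ a primitive $p^n$-th root of unity. Then in $\mathbb{Z}[\mu_{p^n}]$, \[ (1-\mu_{p^n})^{p^n-p^{n-1}}\equiv -p \pmod{(1-\mu_{p^n})^{p^n}}. \] *)

theory Defs
  imports Complex_Main "HOL-Computational_Algebra.Polynomial"
begin

definition primitive_root_of_unity :: "nat \<Rightarrow> complex \<Rightarrow> bool" where
  "primitive_root_of_unity m z \<longleftrightarrow> m > 0 \<and> z ^ m = 1 \<and> (\<forall>k. 0 < k \<and> k < m \<longrightarrow> z ^ k \<noteq> 1)"

definition int_adjoin :: "complex \<Rightarrow> complex set" where
  "int_adjoin z = {poly (map_poly of_int q) z | q :: int poly. True}"

definition cong_in_int_adjoin :: "complex \<Rightarrow> complex \<Rightarrow> complex \<Rightarrow> complex \<Rightarrow> bool" where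
  "cong_in_int_adjoin z a b m \<longleftrightarrow> (\<exists>x \<in> int_adjoin z. a - b = m * x)"

end

theory Submission
  imports Defs
begin

lemma map_poly_of_int_add: "map_poly (of_int :: int \<Rightarrow> complex) (q1 + q2) = map_poly of_int q1 + map_poly of_int q2"
  by (rule poly_eqI) (simp add: coeff_map_poly)

lemma map_poly_of_int_mult: "map_poly (of_int :: int \<Rightarrow> complex) (q1 * q2) = map_poly of_int q1 * map_poly of_int q2"
  by (rule poly_eqI) (simp add: coeff_map_poly coeff_mult)

lemma map_poly_of_int_uminus: "map_poly (of_int :: int \<Rightarrow> complex) (- q1) = - map_poly of_int q1"
  by (rule poly_eqI) (simp add: coeff_map_poly)

lemma ia_of_int: "of_int c \<in> int_adjoin z"
  unfolding int_adjoin_def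
  by (rule CollectI, rule exI[of _ "[:c:]"]) (simp add: map_poly_pCons)

lemma ia_of_nat: "of_nat c \<in> int_adjoin z"
  using ia_of_int[of "int c" z] by simp

lemma ia_0: "0 \<in> int_adjoin z" using ia_of_int[of 0 z] by simp
lemma ia_1: "1 \<in> int_adjoin z" using ia_of_int[of 1 z] by simp

lemma ia_z: "z \<in> int_adjoin z"
  unfolding int_adjoin_def
  by (rule CollectI, rule exI[of _ "[:0,1:]"]) (simp add: map_poly_pCons)

lemma ia_add: "a \<in> int_adjoin z \<Longrightarrow> b \<in> int_adjoin z \<Longrightarrow> a + b \<in> int_adjoin z"
  unfolding int_adjoin_def
  by (auto simp flip: poly_add map_poly_of_int_add)

lemma ia_mult: "a \<in> int_adjoin z \<Longrightarrow> b \<in> int_adjoin z \<Longrightarrow> a * b \<in> int_adjoin z"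
  unfolding int_adjoin_def
  by (auto simp flip: poly_mult map_poly_of_int_mult)

lemma ia_uminus: "a \<in> int_adjoin z \<Longrightarrow> - a \<in> int_adjoin z"
  unfolding int_adjoin_def
  by (auto simp flip: poly_minus map_poly_of_int_uminus)

lemma ia_diff: "a \<in> int_adjoin z \<Longrightarrow> b \<in> int_adjoin z \<Longrightarrow> a - b \<in> int_adjoin z"
  using ia_add[of a z "-b"] ia_uminus[of b z] by simp

lemma ia_power: "a \<in> int_adjoin z \<Longrightarrow> a ^ k \<in> int_adjoin z"
  by (induction k) (auto intro: ia_mult ia_1)

lemma ia_sum: "(\<And>i. i \<in> I \<Longrightarrow> f i \<in> int_adjoin z) \<Longrightarrow> sum f I \<in> int_adjoin z"
  by (induction I rule: infinite_finite_induct) (auto intro: ia_add ia_0)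

lemmas ia_intros = ia_of_int ia_of_nat ia_0 ia_1 ia_z ia_add ia_mult ia_uminus ia_diff ia_power ia_sum

lemma binom_prime_eq:
  fixes a b :: "'a::comm_ring_1"
  assumes p: "prime p"
  shows "(a + b) ^ p = a ^ p + b ^ p + of_nat p * a * b *
     (\<Sum>k\<in>{1..<p}. of_nat ((p choose k) div p) * a ^ (k - 1) * b ^ (p - k - 1))"
proof -
  have p2: "p \<ge> 2" using p prime_ge_2_nat by blast
  have split: "{..p} = insert 0 (insert p {1..<p})" by auto
  have "(a + b) ^ p = (\<Sum>k\<le>p. of_nat (p choose k) * a ^ k * b ^ (p - k))"
    by (rule binomial_ring)
  also have "\<dots> = b ^ p + a ^ p + (\<Sum>k\<in>{1..<p}. of_nat (p choose k) * a ^ k * b ^ (p - k))"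
    using p2 by (simp add: split)
  also have "(\<Sum>k\<in>{1..<p}. of_nat (p choose k) * a ^ k * b ^ (p - k)) =
     (\<Sum>k\<in>{1..<p}. of_nat p * a * b * (of_nat ((p choose k) div p) * a ^ (k - 1) * b ^ (p - k - 1)))"
  proof (rule sum.cong[OF refl])
    fix k assume k: "k \<in> {1..<p}"
    have d: "p dvd (p choose k)" using k p2 p by (intro dvd_choose_prime) auto
    have c: "(p choose k) = p * ((p choose k) div p)" using d by simp
    have ak: "a ^ k = a * a ^ (k - 1)" using k by (cases k) auto
    have bk: "b ^ (p - k) = b * b ^ (p - k - 1)" using k by (cases "p - k") auto
    show "of_nat (p choose k) * a ^ k * b ^ (p - k) =
       of_nat p * a * b * (of_nat ((p choose k) div p) * a ^ (k - 1) * b ^ (p - k - 1))"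
      by (subst c, subst ak, subst bk) (simp add: algebra_simps)
  qed
  finally show ?thesis by (simp add: sum_distrib_left algebra_simps)
qed

lemma L_binom:
  assumes "prime p" "a \<in> int_adjoin z" "b \<in> int_adjoin z"
  shows "\<exists>c\<in>int_adjoin z. (a + b) ^ p = a ^ p + b ^ p + of_nat p * a * b * c"
  using binom_prime_eq[OF assms(1), of a b] assms(2,3)
  by (intro bexI[of _ "\<Sum>k\<in>{1..<p}. of_nat ((p choose k) div p) * a ^ (k - 1) * b ^ (p - k - 1)"]) (auto intro!: ia_intros)

lemma L_binom1:
  assumes p: "prime p" and t: "t \<in> int_adjoin z"
  shows "\<exists>w\<in>int_adjoin z. (t + 1) ^ p = t ^ p + 1 + of_nat p * t * (1 + t * w)"
proof -
  have p2: "p \<ge> 2" using p prime_ge_2_nat by blast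
  have spl: "{1..<p} = insert 1 {2..<p}" using p2 by auto
  define w where "w = (\<Sum>k\<in>{2..<p}. of_nat ((p choose k) div p) * t ^ (k - 2))"
  have "(\<Sum>k\<in>{1..<p}. of_nat ((p choose k) div p) * t ^ (k - 1) * 1 ^ (p - k - 1)) = 1 + t * w"
  proof -
    have "(\<Sum>k\<in>{2..<p}. of_nat ((p choose k) div p) * t ^ (k - 1)) = t * w"
      unfolding w_def sum_distrib_left
    proof (rule sum.cong[OF refl])
      fix k assume "k \<in> {2..<p}"
      then have "k - 1 = Suc (k - 2)" by auto
      then have "t ^ (k - 1) = t * t ^ (k - 2)" by simp
      then show "of_nat ((p choose k) div p) * t ^ (k - 1) = t * (of_nat ((p choose k) div p) * t ^ (k - 2))"
        by simp
    qed
    then show ?thesis using p2 unfolding spl by (subst sum.insert) auto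
  qed
  moreover have "w \<in> int_adjoin z" unfolding w_def using t by (auto intro!: ia_intros)
  ultimately show ?thesis using binom_prime_eq[OF p, of t 1] by auto
qed

lemma L2:
  assumes "a \<in> int_adjoin z" "b \<in> int_adjoin z"
  shows "\<exists>h\<in>int_adjoin z. (a + b) ^ Suc k = b ^ Suc k + of_nat (Suc k) * a * b ^ k + a^2 * h"
proof (induction k)
  case 0
  then show ?case by (intro bexI[of _ 0]) (auto intro: ia_intros)
next
  case (Suc k)
  then obtain h where h: "h \<in> int_adjoin z" "(a + b) ^ Suc k = b ^ Suc k + of_nat (Suc k) * a * b ^ k + a^2 * h"
    by blast
  have "(a + b) ^ Suc (Suc k) = (a + b) * (b ^ Suc k + of_nat (Suc k) * a * b ^ k + a^2 * h)"
    using h by simp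
  also have "\<dots> = b ^ Suc (Suc k) + of_nat (Suc (Suc k)) * a * b ^ Suc k + a^2 * (b * h + of_nat (Suc k) * b ^ k + a * h)"
    by (simp add: algebra_simps power2_eq_square)
  finally show ?case using h assms by (intro bexI[of _ "b * h + of_nat (Suc k) * b ^ k + a * h"]) (auto intro!: ia_intros)
qed

lemma F3:
  assumes p: "prime p" "odd p" and x: "x \<in> int_adjoin z"
  shows "\<exists>B\<in>int_adjoin z. (1 - x) ^ (p ^ j) = 1 - x ^ (p ^ j) + of_nat p * x * B"
proof (induction j)
  case 0
  then show ?case by (intro bexI[of _ 0]) (auto intro: ia_intros)
next
  case (Suc j)
  define q where "q = p ^ j"
  have q1: "q \<ge> 1" unfolding q_def using prime_gt_0_nat[OF p(1)] by (simp add: Suc_le_eq)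
  from Suc obtain B where B: "B \<in> int_adjoin z" "(1 - x) ^ q = 1 - x ^ q + of_nat p * x * B"
    unfolding q_def by blast
  define a where "a = 1 - x ^ q"
  define b where "b = of_nat p * x * B"
  have ab: "a \<in> int_adjoin z" "b \<in> int_adjoin z" unfolding a_def b_def using x B by (auto intro!: ia_intros)
  obtain c where c: "c \<in> int_adjoin z" "(a + b) ^ p = a ^ p + b ^ p + of_nat p * a * b * c"
    using L_binom[OF p(1) ab] by blast
  obtain c' where c': "c' \<in> int_adjoin z" "(1 + (- (x ^ q))) ^ p = 1 ^ p + (- (x ^ q)) ^ p + of_nat p * 1 * (- (x ^ q)) * c'"
    using L_binom[OF p(1) ia_1[of z] ia_uminus[OF ia_power[OF x, of q]]] by blast
  have xq: "x ^ q = x * x ^ (q - 1)" using q1 by (cases q) auto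
  have pp: "(of_nat p :: complex) ^ p = of_nat p * of_nat p ^ (p - 1)" "x ^ p = x * x ^ (p - 1)"
    using p prime_gt_0_nat by (cases p; simp)+
  have ap: "a ^ p = 1 - x ^ (q * p) - of_nat p * x ^ q * c'"
    using c'(2) p(2) unfolding a_def by (simp add: power_mult)
  define B' where "B' = - (x ^ (q - 1) * c') + of_nat p ^ (p - 1) * x ^ (p - 1) * B ^ p + a * of_nat p * B * c"
  have "(1 - x) ^ (p ^ Suc j) = ((1 - x) ^ q) ^ p"
    unfolding q_def by (simp only: power_Suc2 power_mult)
  also have "\<dots> = (a + b) ^ p"
    using B(2) unfolding a_def b_def by simp
  also have "\<dots> = 1 - x ^ (q * p) - of_nat p * x ^ q * c' + b ^ p + of_nat p * a * b * c"
    using c(2) ap by simp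
  also have "\<dots> = 1 - x ^ (p ^ Suc j) + of_nat p * x * B'"
    unfolding B'_def b_def q_def[symmetric]
    apply (simp add: power_mult_distrib q_def mult.commute[of _ p])
    apply (subst xq[unfolded q_def], subst pp(1), subst pp(2))
    by (simp add: algebra_simps)
  finally have eq: "(1 - x) ^ (p ^ Suc j) = 1 - x ^ (p ^ Suc j) + of_nat p * x * B'" .
  have "B' \<in> int_adjoin z" using B c c' ab x unfolding B'_def by (auto intro!: ia_intros)
  with eq show ?case by blast
qed


theorem lemma5p10:
  fixes p n :: nat and \<mu> :: complex
  assumes "prime p" and "odd p" and "n \<ge> 2"
    and "primitive_root_of_unity (p ^ n) \<mu>"
  shows "cong_in_int_adjoin \<mu> ((1 - \<mu>) ^ (p ^ n - p ^ (n - 1))) (- of_nat p) ((1 - \<mu>) ^ (p ^ n))"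
proof -
  note p = assms(1,2)
  have p2: "p \<ge> 2" using p prime_ge_2_nat by blast
  have p3: "p \<ge> 3" using p2 p(2) by (cases "p = 2") auto
  define Z where "Z = int_adjoin \<mu>"
  define m where "m = p ^ (n - 1)"
  define N where "N = p ^ n"
  define ph where "ph = m * (p - 1)"
  define pp where "pp = 1 - \<mu>"
  define P where "P = (of_nat p :: complex)"
  have m1: "m \<ge> 1" unfolding m_def using p2 by (simp add: Suc_le_eq)
  have Nm: "N = p * m" unfolding N_def m_def using assms(3)
    by (metis Suc_diff_1 less_le_trans numeral_2_eq_2 power_Suc zero_less_Suc)
  have "p ^ n - p ^ (n - 1) = N - m" by (simp add: N_def m_def)
  then have phi_eq: "p ^ n - p ^ (n - 1) = ph" unfolding ph_def using Nm
    by (simp add: diff_mult_distrib2 mult.commute)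
  have Nphi: "N = ph + m" unfolding ph_def Nm using p2
    by (simp add: algebra_simps diff_mult_distrib2)
  have piZ: "pp \<in> Z" unfolding pp_def Z_def by (auto intro!: ia_intros)
  have muZ: "\<mu> = 1 - pp" unfolding pp_def by simp
  obtain B where B: "B \<in> Z" "(1 - pp) ^ m = 1 - (pp ^ m) + P * pp * B"
    using F3[OF p piZ[unfolded Z_def], of "n - 1"] unfolding m_def Z_def P_def by blast
  define T where "T = \<mu> ^ m - 1"
  have TZ: "T \<in> Z" unfolding T_def Z_def by (auto intro!: ia_intros)
  have T: "T = - (pp ^ m) + P * pp * B" unfolding T_def using B(2) muZ by simp
  have prim: "N > 0" "\<mu> ^ N = 1" "\<And>k. 0 < k \<Longrightarrow> k < N \<Longrightarrow> \<mu> ^ k \<noteq> 1"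
    using assms(4) unfolding primitive_root_of_unity_def N_def by auto
  have "m < N" unfolding Nm using m1 p2 by simp
  then have "\<mu> ^ m \<noteq> 1" using prim(3) m1 by simp
  then have T0: "T \<noteq> 0" unfolding T_def by simp
  obtain w where w: "w \<in> Z" "(T + 1) ^ p = T ^ p + 1 + P * T * (1 + T * w)"
    using L_binom1[OF p(1) TZ[unfolded Z_def]] unfolding Z_def P_def by blast
  have "(T + 1) ^ p = 1" unfolding T_def using prim(2) Nm by (simp add: power_mult mult.commute)
  then have "T * (T ^ (p - 1) + P * (1 + T * w)) = 0" using w(2) p2
    by (cases p) (auto simp: algebra_simps)
  then have Tp: "T ^ (p - 1) = - P * (1 + T * w)" using T0
    by (simp add: add_eq_0_iff)
  define v where "v = 1 + T * w"
  define S where "S = (\<Sum>i<p - 1. (- (T * w)) ^ i)"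
  have ev: "even (p - 1)" using p(2) by simp
  have "1 - (- (T * w)) ^ (p - 1) = (1 - (- (T * w))) * S"
    unfolding S_def by (rule one_diff_power_eq)
  then have "1 + P * v * w ^ (p - 1) = v * S"
    using ev Tp unfolding v_def by (simp add: power_mult_distrib)
  then have vu: "v * (S - P * w ^ (p - 1)) = 1" by (simp add: algebra_simps)
  define u where "u = S - P * w ^ (p - 1)"
  have uZ: "u \<in> Z" unfolding u_def S_def P_def Z_def using w(1) TZ unfolding Z_def
    by (auto intro!: ia_intros)
  have Pu: "P = - (T ^ (p - 1)) * u"
  proof -
    have "P = P * (v * u)" using vu unfolding u_def by simp
    also have "\<dots> = - (T ^ (p - 1)) * u" using Tp unfolding v_def by simp
    finally show ?thesis .
  qed
  have boot: "a \<le> ph \<Longrightarrow> \<exists>x\<in>Z. P = pp ^ a * x" for a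
  proof (induction a)
    case 0
    then show ?case unfolding P_def Z_def by (intro bexI[of _ P]) (auto simp: P_def intro: ia_intros)
  next
    case (Suc a)
    then obtain x where x: "x \<in> Z" "P = pp ^ a * x" by auto
    define k where "k = min m (Suc a)"
    define y where "y = - (pp ^ (m - k)) + pp ^ (Suc a - k) * x * B"
    have "T = - (pp ^ m) + pp ^ (Suc a) * (x * B)" unfolding T x(2) by (simp add: algebra_simps)
    also have "\<dots> = pp ^ k * y" unfolding y_def k_def
      by (simp add: algebra_simps flip: power_add)
    finally have Tk: "T = pp ^ k * y" .
    have yZ: "y \<in> Z" unfolding y_def using piZ x(1) B(1) unfolding Z_def by (auto intro!: ia_intros)
    have ge: "k * (p - 1) \<ge> Suc a"
    proof (cases "m \<le> Suc a")
      case True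
      then show ?thesis using Suc.prems unfolding k_def ph_def by simp
    next
      case False
      then have "k = Suc a" unfolding k_def by simp
      moreover have "p - 1 \<ge> 1" using p2 by simp
      ultimately show ?thesis by (metis mult.right_neutral mult_le_mono2)
    qed
    have "P = pp ^ (k * (p - 1)) * (- (y ^ (p - 1) * u))"
      using Pu unfolding Tk by (simp add: power_mult_distrib power_mult)
    also have "\<dots> = pp ^ Suc a * (pp ^ (k * (p - 1) - Suc a) * (- (y ^ (p - 1) * u)))"
    proof -
      have e2: "pp ^ (k * (p - 1)) = pp ^ Suc a * pp ^ (k * (p - 1) - Suc a)"
        using ge by (simp only: le_add_diff_inverse flip: power_add)
      show ?thesis by (simp only: e2 mult.assoc)
    qed
    finally have eq: "P = pp ^ Suc a * (pp ^ (k * (p - 1) - Suc a) * (- (y ^ (p - 1) * u)))" .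
    have "pp ^ (k * (p - 1) - Suc a) * (- (y ^ (p - 1) * u)) \<in> Z"
      using yZ uZ piZ unfolding Z_def by (auto intro!: ia_intros)
    with eq show ?case by blast
  qed
  obtain e where e: "e \<in> Z" "P = pp ^ ph * e" using boot by blast
  define D where "D = P * pp * B"
  have DZ: "D \<in> Z" unfolding D_def P_def using piZ B(1) unfolding Z_def by (auto intro!: ia_intros)
  obtain h where h: "h \<in> Z"
    "(D + - (pp ^ m)) ^ Suc (p - 2) = (- (pp ^ m)) ^ Suc (p - 2) + of_nat (Suc (p - 2)) * D * (- (pp ^ m)) ^ (p - 2) + D^2 * h"
    using L2[OF DZ[unfolded Z_def] ia_uminus[OF ia_power[OF piZ[unfolded Z_def]]]] unfolding Z_def by blast
  have sp: "Suc (p - 2) = p - 1" using p2 by simp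
  have odd2: "odd (p - 2)" using p(2) p3 by (simp add: even_diff_nat)
  have Texp: "T ^ (p - 1) = pp ^ ph - of_nat (p - 1) * D * pp ^ (m * (p - 2)) + D^2 * h"
    using h(2) unfolding sp T D_def[symmetric] using ev odd2
    by (simp add: power_mult ph_def)
  have eq0: "pp ^ ph = - P * (1 + T * w) + of_nat (p - 1) * D * pp ^ (m * (p - 2)) - D^2 * h"
    by (simp only: Tp[symmetric] Texp) (simp add: algebra_simps)
  have eq1: "pp ^ ph + P = P * pp ^ m * w - P^2 * pp * B * w
      + of_nat (p - 1) * P * pp * B * pp ^ (m * (p - 2)) - P^2 * pp^2 * B^2 * h"
    by (simp add: eq0 T D_def algebra_simps power2_eq_square)
  define r where "r = m * (p - 2)"
  define s where "s = m * (p - 3) + 1"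
  obtain q where q: "p = q + 3" using p3 by (metis add.commute le_Suc_ex)
  have r: "2 * ph = N + r" unfolding r_def ph_def Nm q
    by (simp add: algebra_simps)
  have s: "ph + 1 + m * (p - 2) = N + s" unfolding s_def ph_def Nm q
    by (simp add: algebra_simps)
  have P2: "P^2 = pp ^ N * (pp ^ r * e^2)"
    using e(2) r by (simp add: power_mult_distrib power2_eq_square mult_ac flip: power_add mult_2)
  have t1: "P * pp ^ m * w = pp ^ N * (e * w)"
    using e(2) Nphi by (simp add: mult_ac add.commute flip: power_add)
  have t3: "P * pp * pp ^ (m * (p - 2)) = pp ^ N * (pp ^ s * e)"
  proof -
    have "pp ^ N * pp ^ s = pp ^ (ph + 1 + m * (p - 2))" using s by (simp flip: power_add)
    then show ?thesis using e(2) by (simp add: power_add mult_ac)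
  qed
  define x where "x = e * w - pp ^ r * e^2 * pp * B * w + of_nat (p - 1) * B * pp ^ s * e
      - pp ^ r * e^2 * pp^2 * B^2 * h"
  have "pp ^ ph + P = pp ^ N * x"
  proof -
    have "pp ^ ph + P = P * pp ^ m * w - P^2 * (pp * B * w)
      + of_nat (p - 1) * B * (P * pp * pp ^ (m * (p - 2))) - P^2 * (pp^2 * B^2 * h)"
      using eq1 by (simp add: algebra_simps)
    also have "\<dots> = pp ^ N * x" unfolding t1 t3 P2 x_def by (simp add: algebra_simps)
    finally show ?thesis .
  qed
  moreover have "x \<in> Z" unfolding x_def using e(1) w(1) piZ B(1) h(1) unfolding Z_def
    by (auto intro!: ia_intros)
  ultimately show ?thesis
    unfolding cong_in_int_adjoin_def phi_eq unfolding N_def[symmetric] pp_def[symmetric] Z_def[symmetric] P_def[symmetric]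
    by auto
qed

end
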